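(* Let $(M,\varphi,\xi,\eta,g)$ be an almost contact metric manifold. If $M$ satisfies the $(G1)$ identity then it satisfies the $(G2)$ identity, and if it satisfies the $(G2)$ identity then it satisfies the $(G3)$ identity. Equivalently, for any class $\mathcal L$ of almost contact metric manifolds, denoting by $\mathcal L_i$ the subclass of those satisfying $(Gi)$, one has $\mathcal L_1\subseteq\mathcal L_2\subseteq\mathcal L_3\subseteq\mathcal L$.
   Context: An almost contact metric manifold $(M,\varphi,\xi,\eta,g)$: $\varphi$ a $(1,1)$-tensor, $\xi$ a vector field, $\eta$ a $1$-form, $g$ a Riemannian metric with $\eta(\xi)=1$, $\varphi^2=-I+\eta\otimes\xi$, $g(\varphi X,\varphi Y)=g(X,Y)-\eta(X)\eta(Y)$. Curvature conventions: $R_{XY}Z=\nabla_X\nabla_YZ-\nabla_Y\nabla_XZ-\nabla_{[X,Y]}Z$, $R(X,Y,Z,W)=-g(R_{XY}Z,W)$. For all $X,Y,Z,W\in\chi(M)$ the identities are: $(G1)$: $R(X,Y,\varphi Z,\varphi W)-R(X,Y,Z,W)=g(Y,\varphi W)g(X,\varphi Z)-g(X,\varphi W)g(Y,\varphi Z)+g(X,W)g(Y,Z)-g(Y,W)g(X,Z)$; $(G2)$: $R(X,Y,Z,W)=R(\varphi X,Y,Z,\varphi W)+R(X,\varphi Y,Z,\varphi W)+R(X,Y,\varphi Z,\varphi W)+g(X,Z)\eta(W)\eta(Y)-g(Z,Y)\eta(X)\eta(W)$; $(G3)$: $R(X,Y,Z,W)=R(\varphi X,\varphi Y,\varphi Z,\varphi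 W)+g(X,Z)\eta(W)\eta(Y)-g(Z,Y)\eta(X)\eta(W)+g(Y,W)\eta(X)\eta(Z)-g(X,W)\eta(Y)\eta(Z)$. *)

theory Defs
  imports "HOL-Analysis.Analysis"
begin

text \<open>Pointwise (tangent-space) model. V is the tangent space at a point, a finite-dimensional
real vector space. g is the metric at that point, a positive definite symmetric bilinear form.\<close>

definition metric_form :: "('a::real_vector \<Rightarrow> 'a \<Rightarrow> real) \<Rightarrow> bool" where
  "metric_form g \<longleftrightarrow> bilinear g \<and> (\<forall>X Y. g X Y = g Y X) \<and> (\<forall>X. X \<noteq> 0 \<longrightarrow> g X X > 0)"

definition almost_contact_metric ::
  "('a::real_vector \<Rightarrow> 'a) \<Rightarrow> 'a \<Rightarrow> ('a \<Rightarrow> real) \<Rightarrow> ('a \<Rightarrow> 'a \<Rightarrow> real) \<Rightarrow> bool" where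
  "almost_contact_metric phi xi eta g \<longleftrightarrow>
     linear phi \<and> linear eta \<and> metric_form g \<and> eta xi = 1 \<and>
     (\<forall>X. phi (phi X) = - X + eta X *\<^sub>R xi) \<and>
     (\<forall>X Y. g (phi X) (phi Y) = g X Y - eta X * eta Y)"

definition quadrilinear :: "('a::real_vector \<Rightarrow> 'a \<Rightarrow> 'a \<Rightarrow> 'a \<Rightarrow> real) \<Rightarrow> bool" where
  "quadrilinear R \<longleftrightarrow>
     (\<forall>Y Z W. linear (\<lambda>X. R X Y Z W)) \<and> (\<forall>X Z W. linear (\<lambda>Y. R X Y Z W)) \<and>
     (\<forall>X Y W. linear (\<lambda>Z. R X Y Z W)) \<and> (\<forall>X Y Z. linear (\<lambda>W. R X Y Z W))"

text \<open>The algebraic symmetries satisfied at each point by the Riemann curvature tensor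
  R(X,Y,Z,W) = - g(R_XY Z, W) of the Levi-Civita connection of g.\<close>
definition curvature_tensor :: "('a::real_vector \<Rightarrow> 'a \<Rightarrow> 'a \<Rightarrow> 'a \<Rightarrow> real) \<Rightarrow> bool" where
  "curvature_tensor R \<longleftrightarrow> quadrilinear R \<and>
     (\<forall>X Y Z W. R X Y Z W = - R Y X Z W) \<and>
     (\<forall>X Y Z W. R X Y Z W = - R X Y W Z) \<and>
     (\<forall>X Y Z W. R X Y Z W = R Z W X Y) \<and>
     (\<forall>X Y Z W. R X Y Z W + R Y Z X W + R Z X Y W = 0)"

definition G1 :: "('a::real_vector \<Rightarrow> 'a) \<Rightarrow> 'a \<Rightarrow> ('a \<Rightarrow> real) \<Rightarrow> ('a \<Rightarrow> 'a \<Rightarrow> real)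
     \<Rightarrow> ('a \<Rightarrow> 'a \<Rightarrow> 'a \<Rightarrow> 'a \<Rightarrow> real) \<Rightarrow> bool" where
  "G1 phi xi eta g R \<longleftrightarrow> (\<forall>X Y Z W.
     R X Y (phi Z) (phi W) - R X Y Z W =
       g Y (phi W) * g X (phi Z) - g X (phi W) * g Y (phi Z) + g X W * g Y Z - g Y W * g X Z)"

definition G2 :: "('a::real_vector \<Rightarrow> 'a) \<Rightarrow> 'a \<Rightarrow> ('a \<Rightarrow> real) \<Rightarrow> ('a \<Rightarrow> 'a \<Rightarrow> real)
     \<Rightarrow> ('a \<Rightarrow> 'a \<Rightarrow> 'a \<Rightarrow> 'a \<Rightarrow> real) \<Rightarrow> bool" where
  "G2 phi xi eta g R \<longleftrightarrow> (\<forall>X Y Z W.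
     R X Y Z W = R (phi X) Y Z (phi W) + R X (phi Y) Z (phi W) + R X Y (phi Z) (phi W)
       + g X Z * eta W * eta Y - g Z Y * eta X * eta W)"

definition G3 :: "('a::real_vector \<Rightarrow> 'a) \<Rightarrow> 'a \<Rightarrow> ('a \<Rightarrow> real) \<Rightarrow> ('a \<Rightarrow> 'a \<Rightarrow> real)
     \<Rightarrow> ('a \<Rightarrow> 'a \<Rightarrow> 'a \<Rightarrow> 'a \<Rightarrow> real) \<Rightarrow> bool" where
  "G3 phi xi eta g R \<longleftrightarrow> (\<forall>X Y Z W.
     R X Y Z W = R (phi X) (phi Y) (phi Z) (phi W)
       + g X Z * eta W * eta Y - g Z Y * eta X * eta W
       + g Y W * eta X * eta Z - g X W * eta Y * eta Z)"

end

theory Submission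
  imports Defs
begin

lemma acm_facts:
  fixes phi :: "'a::real_vector \<Rightarrow> 'a"
  assumes "almost_contact_metric phi xi eta g"
  shows "phi xi = 0" "\<And>X. eta (phi X) = 0" "\<And>X. eta X = g X xi"
    "\<And>X Y. g (phi X) Y = - g X (phi Y)" "\<And>X Y. g X Y = g Y X"
    "\<And>X Y. g X (phi (phi Y)) = - g X Y + eta Y * eta X"
    "\<And>X. phi (phi X) = - X + eta X *\<^sub>R xi"
    "\<And>X Y. g (phi X) (phi Y) = g X Y - eta X * eta Y"
proof -
  have lp: "linear phi" and le: "linear eta" and mf: "metric_form g" and ex: "eta xi = 1"
    and pp: "\<And>X. phi (phi X) = - X + eta X *\<^sub>R xi"
    and gp: "\<And>X Y. g (phi X) (phi Y) = g X Y - eta X * eta Y"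
    using assms unfolding almost_contact_metric_def by auto
  have bl: "bilinear g" and sym: "\<And>X Y. g X Y = g Y X" using mf unfolding metric_form_def by auto
  have gl: "\<And>X. linear (g X)" using bl unfolding bilinear_def by auto
  have gr: "\<And>Y. linear (\<lambda>X. g X Y)" using bl unfolding bilinear_def by auto
  have p3: "eta X *\<^sub>R phi xi = eta (phi X) *\<^sub>R xi" for X
  proof -
    have "phi (phi (phi X)) = - phi X + eta X *\<^sub>R phi xi"
      using pp[of X] lp by (simp add: linear_add linear_neg linear_scale linear_diff)
    moreover have "phi (phi (phi X)) = - phi X + eta (phi X) *\<^sub>R xi" using pp[of "phi X"] .
    ultimately show ?thesis by simp
  qed
  have a: "phi xi = eta (phi xi) *\<^sub>R xi" using p3[of xi] ex by simp
  have "phi (phi xi) = 0" using pp[of xi] ex by simp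
  moreover have "phi (phi xi) = (eta (phi xi) * eta (phi xi)) *\<^sub>R xi"
  proof -
    have "phi (phi xi) = eta (phi xi) *\<^sub>R phi xi" by (subst a) (simp add: lp linear_scale)
    also have "\<dots> = eta (phi xi) *\<^sub>R (eta (phi xi) *\<^sub>R xi)" by (subst a) simp
    finally show ?thesis by simp
  qed
  moreover have "xi \<noteq> 0" using ex le linear_0 by fastforce
  ultimately have "eta (phi xi) = 0" by simp
  then show px: "phi xi = 0" using a by simp
  show ep: "eta (phi X) = 0" for X using p3[of X] px \<open>xi \<noteq> 0\<close> by simp
  show eg: "eta X = g X xi" for X proof -
    have "g 0 (phi X) = 0" using linear_0[OF gr[of "phi X"]] by simp
    then show ?thesis using gp[of xi X] px ex sym[of xi X] by simp
  qed
  show gpp: "g X (phi (phi Y)) = - g X Y + eta Y * eta X" for X Y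
    using gl[of X] by (simp add: pp linear_add linear_neg linear_scale linear_diff eg sym[of xi])
  show "g (phi X) Y = - g X (phi Y)" for X Y
  proof -
    have "g (phi X) (phi (phi Y)) = - g (phi X) Y" using gpp[of "phi X" Y] ep by simp
    moreover have "g (phi X) (phi (phi Y)) = g X (phi Y)" using gp[of X "phi Y"] ep by simp
    ultimately show ?thesis by simp
  qed
  show "g X Y = g Y X" for X Y by (rule sym)
  show "phi (phi X) = - X + eta X *\<^sub>R xi" for X by (rule pp)
  show "g (phi X) (phi Y) = g X Y - eta X * eta Y" for X Y by (rule gp)
qed

lemma R_lin:
  fixes R :: "'a::real_vector \<Rightarrow> 'a \<Rightarrow> 'a \<Rightarrow> 'a \<Rightarrow> real"
  assumes "curvature_tensor R"
  shows "\<And>X Y Z W c v. R (- X + c *\<^sub>R v) Y Z W = - R X Y Z W + c * R v Y Z W"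
    "\<And>X Y Z W c v. R X (- Y + c *\<^sub>R v) Z W = - R X Y Z W + c * R X v Z W"
    "\<And>X Y Z W c v. R X Y (- Z + c *\<^sub>R v) W = - R X Y Z W + c * R X Y v W"
    "\<And>X Y Z W c v. R X Y Z (- W + c *\<^sub>R v) = - R X Y Z W + c * R X Y Z v"
    "\<And>X Y Z. R X Y Z 0 = 0" "\<And>X Y Z. R X Y 0 Z = 0"
    "\<And>X Y Z. R X 0 Y Z = 0" "\<And>X Y Z. R 0 X Y Z = 0"
proof -
  have q: "quadrilinear R" using assms unfolding curvature_tensor_def by auto
  have l1: "linear (\<lambda>X. R X Y Z W)" for Y Z W using q unfolding quadrilinear_def by auto
  have l2: "linear (\<lambda>Y. R X Y Z W)" for X Z W using q unfolding quadrilinear_def by auto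
  have l3: "linear (\<lambda>Z. R X Y Z W)" for X Y W using q unfolding quadrilinear_def by auto
  have l4: "linear (\<lambda>W. R X Y Z W)" for X Y Z using q unfolding quadrilinear_def by auto
  show "R (- X + c *\<^sub>R v) Y Z W = - R X Y Z W + c * R v Y Z W" for X Y Z W c v
    using linear_diff[OF l1[of Y Z W]] linear_scale[OF l1[of Y Z W]] by simp
  show "R X (- Y + c *\<^sub>R v) Z W = - R X Y Z W + c * R X v Z W" for X Y Z W c v
    using linear_diff[OF l2[of X Z W]] linear_scale[OF l2[of X Z W]] by simp
  show "R X Y (- Z + c *\<^sub>R v) W = - R X Y Z W + c * R X Y v W" for X Y Z W c v
    using linear_diff[OF l3[of X Y W]] linear_scale[OF l3[of X Y W]] by simp
  show "R X Y Z (- W + c *\<^sub>R v) = - R X Y Z W + c * R X Y Z v" for X Y Z W c v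
    using linear_diff[OF l4[of X Y Z]] linear_scale[OF l4[of X Y Z]] by simp
  show "R X Y Z 0 = 0" for X Y Z using linear_0[OF l4[of X Y Z]] by simp
  show "R X Y 0 Z = 0" for X Y Z using linear_0[OF l3[of X Y Z]] by simp
  show "R X 0 Y Z = 0" for X Y Z using linear_0[OF l2[of X Y Z]] by simp
  show "R 0 X Y Z = 0" for X Y Z using linear_0[OF l1[of X Y Z]] by simp
qed

lemma g0: assumes "almost_contact_metric phi xi eta g" shows "g X 0 = 0" "g 0 X = 0"
proof -
  have "bilinear g" using assms unfolding almost_contact_metric_def metric_form_def by auto
  then have "linear (g X)" "linear (\<lambda>Y. g Y X)" unfolding bilinear_def by auto
  then show "g X 0 = 0" "g 0 X = 0" using linear_0 by auto
qed

theorem mainTheorem5: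
  fixes phi :: "'a::euclidean_space \<Rightarrow> 'a" and xi :: 'a and eta :: "'a \<Rightarrow> real"
    and g :: "'a \<Rightarrow> 'a \<Rightarrow> real" and R :: "'a \<Rightarrow> 'a \<Rightarrow> 'a \<Rightarrow> 'a \<Rightarrow> real"
  assumes "almost_contact_metric phi xi eta g"
    and "curvature_tensor R"
  shows "(G1 phi xi eta g R \<longrightarrow> G2 phi xi eta g R) \<and> (G2 phi xi eta g R \<longrightarrow> G3 phi xi eta g R)"
proof -
  note F = acm_facts[OF assms(1)]
  note L = R_lin[OF assms(2)]
  note g0s = g0[OF assms(1)]
  have as1: "\<And>X Y Z W. R X Y Z W = - R Y X Z W"
   and as2: "\<And>X Y Z W. R X Y Z W = - R X Y W Z"
   and ps: "\<And>X Y Z W. R X Y Z W = R Z W X Y"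
    using assms(2) unfolding curvature_tensor_def by blast+
  have P1: "R (phi (phi X)) Y Z W = - R X Y Z W + eta X * R xi Y Z W" for X Y Z W
    unfolding F(7) by (rule L(1))
  have P2: "R X (phi (phi Y)) Z W = - R X Y Z W + eta Y * R X xi Z W" for X Y Z W
    unfolding F(7) by (rule L(2))
  have P3: "R X Y (phi (phi Z)) W = - R X Y Z W + eta Z * R X Y xi W" for X Y Z W
    unfolding F(7) by (rule L(3))
  have P4: "R X Y Z (phi (phi W)) = - R X Y Z W + eta W * R X Y Z xi" for X Y Z W
    unfolding F(7) by (rule L(4))
  have gs: "g X (phi Y) = - g Y (phi X)" for X Y
    using F(4)[of Y X] F(5)[of "phi Y" X] by simp
  have exi: "eta xi = 1" using assms(1) unfolding almost_contact_metric_def by blast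
  note norm = F(8) F(6) F(4) F(2) F(1) g0s L(5-8)
  have part1: "G2 phi xi eta g R" if "G1 phi xi eta g R"
  proof -
    have H: "R X Y (phi Z) (phi W) - R X Y Z W =
       g Y (phi W) * g X (phi Z) - g X (phi W) * g Y (phi Z) + g X W * g Y Z - g Y W * g X Z"
      for X Y Z W using that unfolding G1_def by blast
    have Rxi: "R X Y Z xi = eta Y * g X Z - eta X * g Y Z" for X Y Z
      using H[of X Y Z xi] by (simp add: norm F(3)[symmetric] F(5)[of xi X] F(5)[of xi Y])
    have E: "R X Y (phi Z) W + R X Y Z (phi W) =
       - (g Y (phi (phi W)) * g X (phi Z) - g X (phi (phi W)) * g Y (phi Z) + g X (phi W) * g Y Z - g Y (phi W) * g X Z)
       + eta W * (eta Y * g X (phi Z) - eta X * g Y (phi Z))" for X Y Z W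
      using H[of X Y Z "phi W"] Rxi[of X Y "phi Z"] by (simp add: P4)
    show ?thesis unfolding G2_def
    proof (intro allI)
      fix X Y Z W
      have "R (phi X) Y Z (phi W) + R X (phi Y) Z (phi W) = R Z (phi W) (phi X) Y + R Z (phi W) X (phi Y)"
        using ps[of "phi X" Y Z "phi W"] ps[of X "phi Y" Z "phi W"] by linarith
      note e = this E[of Z "phi W" X Y] H[of X Y Z W]
      show "R X Y Z W = R (phi X) Y Z (phi W) + R X (phi Y) Z (phi W) + R X Y (phi Z) (phi W)
       + g X Z * eta W * eta Y - g Z Y * eta X * eta W"
        using e by (simp add: norm gs[of W Y] gs[of Z X] gs[of Z Y] gs[of W X]
             F(5)[of W Y] F(5)[of Z X] F(5)[of W X] F(5)[of Z Y] algebra_simps)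
    qed
  qed
  have part2: "G3 phi xi eta g R" if "G2 phi xi eta g R"
  proof -
    have H: "R X Y Z W = R (phi X) Y Z (phi W) + R X (phi Y) Z (phi W) + R X Y (phi Z) (phi W)
       + g X Z * eta W * eta Y - g Z Y * eta X * eta W" for X Y Z W
      using that unfolding G2_def by blast
    have Rxi: "R X Y Z xi = eta Y * g X Z - eta X * g Y Z" for X Y Z
      using H[of X Y Z xi] by (simp add: norm F(3)[symmetric] F(5)[of xi X] F(5)[of xi Y] F(5)[of Z Y] exi
         algebra_simps)
    have C1: "R xi (phi Y) Z (phi W) = eta Z * (g W Y - eta W * eta Y)" for Y Z W
    proof -
      have "R xi (phi Y) Z (phi W) = R Z (phi W) xi (phi Y)" by (rule ps)
      also have "\<dots> = - R Z (phi W) (phi Y) xi" by (rule as2)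
      finally show ?thesis using Rxi[of Z "phi W" "phi Y"] by (simp add: norm)
    qed
    have C2: "R (phi X) xi Z (phi W) = - (eta Z * (g W X - eta W * eta X))" for X Z W
      using as1[of "phi X" xi Z "phi W"] C1[of X Z W] by simp
    have K: "R (phi X) (phi Y) Z W = - R X Y Z W + R X Y (phi Z) (phi W)
       + g X Z * eta W * eta Y - g Z Y * eta X * eta W
       + eta X * R xi (phi Y) Z (phi W) + eta Y * R (phi X) xi Z (phi W)
       + R (phi X) (phi Y) (phi Z) (phi W)" for X Y Z W
    proof -
      have "R (phi X) (phi Y) Z W = R (phi (phi X)) (phi Y) Z (phi W) + R (phi X) (phi (phi Y)) Z (phi W)
         + R (phi X) (phi Y) (phi Z) (phi W)"
        using H[of "phi X" "phi Y" Z W] by (simp add: F(2))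
      then show ?thesis using H[of X Y Z W] P1[of X "phi Y" Z "phi W"] P2[of "phi X" Y Z "phi W"]
        by linarith
    qed
    show ?thesis unfolding G3_def
    proof (intro allI)
      fix X Y Z W
      have "2 * R X Y Z W = 2 * R (phi X) (phi Y) (phi Z) (phi W)
         + g X Z * eta W * eta Y - g Z Y * eta X * eta W
         + g Z X * eta Y * eta W - g X W * eta Z * eta Y
         + eta X * R xi (phi Y) Z (phi W) + eta Y * R (phi X) xi Z (phi W)
         + eta Z * R xi (phi W) X (phi Y) + eta W * R (phi Z) xi X (phi Y)"
        using K[of X Y Z W] K[of Z W X Y] ps[of "phi X" "phi Y" Z W] ps[of X Y "phi Z" "phi W"]
          ps[of Z W X Y] ps[of "phi Z" "phi W" "phi X" "phi Y"] by linarith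
      then show "R X Y Z W = R (phi X) (phi Y) (phi Z) (phi W)
       + g X Z * eta W * eta Y - g Z Y * eta X * eta W
       + g Y W * eta X * eta Z - g X W * eta Y * eta Z"
        by (simp add: C1 C2 F(5)[of W Y] F(5)[of Z X] F(5)[of W X] F(5)[of Z Y] F(5)[of Y X] F(5)[of W Z]
          algebra_simps)
    qed
  qed
  show ?thesis using part1 part2 by blast
qed

end
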